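(* Let $G=(\mathcal{N},\mathcal{A})$ be a directed graph with $m$ nodes and $n$ arcs, start node $s$ and end node $t$, let $\mathbf{A}\in\mathbb{R}^{(m-1)\times n}$ be its node–arc incidence matrix with the row of $t$ deleted, and let $\mathbf{b}\in\mathbb{R}^{m-1}$ have entry $+1$ at $s$ and $0$ elsewhere. Let $\hat{\mathbf{x}}^r_1,\dots,\hat{\mathbf{x}}^r_R$ satisfy $\mathbf{A}\hat{\mathbf{x}}^r_q=\mathbf{b}$, $\hat{\mathbf{x}}^r_q\ge\mathbf{0}$. Let $(\mathbf{c}^*,\mathbf{p}^*,\boldsymbol{\epsilon}^{*})$ be an optimal solution of $$\min_{\mathbf{c},\mathbf{p},\boldsymbol{\epsilon}}\ \sum_{q=1}^R \epsilon_q^2\quad\text{s.t.}\quad \mathbf{A}^\top\mathbf{p}\le \mathbf{c},\quad \mathbf{c}^\top\hat{\mathbf{x}}^r_q=\mathbf{b}^\top\mathbf{p}+\epsilon_q\ (q=1,\dots,R),\quad \|\mathbf{c}\|_\infty=1,\quad \mathbf{A}\mathbf{c}=\mathbf{0}.$$ Then the network $G$ with arc costs $\mathbf{c}^*$ contains no directed cycle of negative total cost.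
   Context: In the incidence matrix, the column of arc $(i,j)$ has $+1$ in row $i$ and $-1$ in row $j$ (rows other than $t$). The forward problem is $\min\{\mathbf{c}^\top\mathbf{x}:\mathbf{A}\mathbf{x}=\mathbf{b},\ \mathbf{x}\ge\mathbf{0}\}$, and $\mathbf{p}$ is the dual vector of its flow-balance constraints. *)

theory Defs
  imports Main "HOL-Analysis.Analysis"
begin

text \<open>Vectors indexed by arcs are functions ('v \<times> 'v) \<Rightarrow> real (only values on Arcs matter),
  vectors indexed by the rows N - {t} are functions 'v \<Rightarrow> real.\<close>

definition incid :: "'v \<Rightarrow> 'v \<times> 'v \<Rightarrow> real" where
  "incid i a = (if i = fst a then 1 else 0) - (if i = snd a then 1 else 0)"

definition Amul :: "('v \<times> 'v) set \<Rightarrow> (('v \<times> 'v) \<Rightarrow> real) \<Rightarrow> 'v \<Rightarrow> real" where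
  "Amul Arcs x i = (\<Sum>a\<in>Arcs. incid i a * x a)"

definition ATmul :: "'v set \<Rightarrow> 'v \<Rightarrow> ('v \<Rightarrow> real) \<Rightarrow> ('v \<times> 'v) \<Rightarrow> real" where
  "ATmul N t p a = (\<Sum>i\<in>N - {t}. incid i a * p i)"

definition bvec :: "'v \<Rightarrow> 'v \<Rightarrow> real" where
  "bvec s i = (if i = s then 1 else 0)"

definition bdot :: "'v set \<Rightarrow> 'v \<Rightarrow> 'v \<Rightarrow> ('v \<Rightarrow> real) \<Rightarrow> real" where
  "bdot N s t p = (\<Sum>i\<in>N - {t}. bvec s i * p i)"

definition cdot :: "('v \<times> 'v) set \<Rightarrow> (('v \<times> 'v) \<Rightarrow> real) \<Rightarrow> (('v \<times> 'v) \<Rightarrow> real) \<Rightarrow> real" where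
  "cdot Arcs c x = (\<Sum>a\<in>Arcs. c a * x a)"

definition infnorm_arcs :: "('v \<times> 'v) set \<Rightarrow> (('v \<times> 'v) \<Rightarrow> real) \<Rightarrow> real" where
  "infnorm_arcs Arcs c = Max ((\<lambda>a. \<bar>c a\<bar>) ` Arcs)"

definition io_feasible ::
  "'v set \<Rightarrow> ('v \<times> 'v) set \<Rightarrow> 'v \<Rightarrow> 'v \<Rightarrow> nat \<Rightarrow> (nat \<Rightarrow> ('v \<times> 'v) \<Rightarrow> real)
   \<Rightarrow> (('v \<times> 'v) \<Rightarrow> real) \<Rightarrow> ('v \<Rightarrow> real) \<Rightarrow> (nat \<Rightarrow> real) \<Rightarrow> bool" where
  "io_feasible N Arcs s t R xhat c p eps \<longleftrightarrow>
     (\<forall>a\<in>Arcs. ATmul N t p a \<le> c a) \<and>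
     (\<forall>q\<in>{1..R}. cdot Arcs c (xhat q) = bdot N s t p + eps q) \<and>
     infnorm_arcs Arcs c = 1 \<and>
     (\<forall>i\<in>N - {t}. Amul Arcs c i = 0)"

definition io_objective :: "nat \<Rightarrow> (nat \<Rightarrow> real) \<Rightarrow> real" where
  "io_objective R eps = (\<Sum>q=1..R. (eps q)\<^sup>2)"

definition is_dicycle :: "('v \<times> 'v) set \<Rightarrow> 'v list \<Rightarrow> bool" where
  "is_dicycle Arcs vs \<longleftrightarrow> vs \<noteq> [] \<and> distinct vs \<and>
     (\<forall>i<length vs. (vs ! i, vs ! ((i + 1) mod length vs)) \<in> Arcs)"

definition cycle_cost :: "(('v \<times> 'v) \<Rightarrow> real) \<Rightarrow> 'v list \<Rightarrow> real" where
  "cycle_cost c vs = (\<Sum>i<length vs. c (vs ! i, vs ! ((i + 1) mod length vs)))"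

end

theory Submission
  imports Defs
begin

lemma ATmul_eq:
  assumes "finite N"
  shows "ATmul N t p (i, j) = (if i \<in> N - {t} then p i else 0) - (if j \<in> N - {t} then p j else 0)"
proof -
  have "ATmul N t p (i, j) = (\<Sum>k\<in>N - {t}. (if k = i then p k else 0) - (if k = j then p k else 0))"
    unfolding ATmul_def incid_def by (intro sum.cong) (auto simp: algebra_simps)
  also have "\<dots> = (\<Sum>k\<in>N - {t}. (if k = i then p k else 0)) - (\<Sum>k\<in>N - {t}. (if k = j then p k else 0))"
    by (rule sum_subtractf)
  also have "\<dots> = (if i \<in> N - {t} then p i else 0) - (if j \<in> N - {t} then p j else 0)"
    using assms by (simp add: sum.delta')
  finally show ?thesis .
qed

lemma sum_mod_shift:
  fixes g :: "nat \<Rightarrow> real"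
  assumes "n > 0"
  shows "(\<Sum>i<n. g ((i + 1) mod n)) = (\<Sum>i<n. g i)"
proof -
  obtain m where n: "n = Suc m" using assms by (cases n) auto
  have "(\<Sum>i<Suc m. g ((i + 1) mod Suc m)) = (\<Sum>i<m. g ((i + 1) mod Suc m)) + g 0"
    by (simp add: sum.lessThan_Suc)
  also have "(\<Sum>i<m. g ((i + 1) mod Suc m)) = (\<Sum>i<m. g (Suc i))"
    by (intro sum.cong) auto
  also have "(\<Sum>i<m. g (Suc i)) + g 0 = (\<Sum>i<Suc m. g i)"
    by (simp only: sum.lessThan_Suc_shift add.commute)
  finally show ?thesis using n by simp
qed

theorem proposition1:
  fixes N :: "'v set" and Arcs :: "('v \<times> 'v) set" and s t :: 'v and R :: nat
    and xhat :: "nat \<Rightarrow> ('v \<times> 'v) \<Rightarrow> real"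
    and cs :: "('v \<times> 'v) \<Rightarrow> real" and ps :: "'v \<Rightarrow> real" and epss :: "nat \<Rightarrow> real"
  assumes "finite N" and "Arcs \<subseteq> N \<times> N"
    and "s \<in> N" and "t \<in> N" and "s \<noteq> t"
    and "\<forall>q\<in>{1..R}. (\<forall>i\<in>N - {t}. Amul Arcs (xhat q) i = bvec s i) \<and> (\<forall>a\<in>Arcs. xhat q a \<ge> 0)"
    and "io_feasible N Arcs s t R xhat cs ps epss"
    and "\<forall>c p eps. io_feasible N Arcs s t R xhat c p eps \<longrightarrow> io_objective R epss \<le> io_objective R eps"
  shows "\<not> (\<exists>vs. is_dicycle Arcs vs \<and> cycle_cost cs vs < 0)"
proof
  assume "\<exists>vs. is_dicycle Arcs vs \<and> cycle_cost cs vs < 0"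
  then obtain vs where cyc: "is_dicycle Arcs vs" and neg: "cycle_cost cs vs < 0" by blast
  define P where "P k = (if k \<in> N - {t} then ps k else 0)" for k
  define n where "n = length vs"
  have n0: "n > 0" using cyc unfolding is_dicycle_def n_def by auto
  have le: "\<And>a. a \<in> Arcs \<Longrightarrow> P (fst a) - P (snd a) \<le> cs a"
  proof -
    fix a assume "a \<in> Arcs"
    then have "ATmul N t ps a \<le> cs a" using assms(7) unfolding io_feasible_def by blast
    then show "P (fst a) - P (snd a) \<le> cs a"
      using ATmul_eq[OF assms(1), of t ps "fst a" "snd a"] unfolding P_def by simp
  qed
  have "(\<Sum>i<n. P (vs ! i) - P (vs ! ((i + 1) mod n))) \<le> (\<Sum>i<n. cs (vs ! i, vs ! ((i + 1) mod n)))"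
  proof (rule sum_mono)
    fix i assume "i \<in> {..<n}"
    then have "(vs ! i, vs ! ((i + 1) mod n)) \<in> Arcs" using cyc unfolding is_dicycle_def n_def by auto
    from le[OF this] show "P (vs ! i) - P (vs ! ((i + 1) mod n)) \<le> cs (vs ! i, vs ! ((i + 1) mod n))" by simp
  qed
  moreover have "(\<Sum>i<n. P (vs ! i) - P (vs ! ((i + 1) mod n))) = 0"
    using sum_mod_shift[OF n0, of "\<lambda>i. P (vs ! i)"] by (simp add: sum_subtractf)
  ultimately have "0 \<le> cycle_cost cs vs" unfolding cycle_cost_def n_def by simp
  with neg show False by simp
qed

end
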